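(* Let $\ell:\mathbb{R}^d\times\mathcal{A}\to[0,B]$, let $a_1,\dots,a_n\in\mathcal A$, $f(x)=\frac1n\sum_{i=1}^n\ell(x;a_i)$, and for $\sigma>0$ let $\tilde f(x)=\mathbb{E}_z[f(x+z)]$ with $z\sim N(0,\sigma^2I_{d\times d})$ and $g(x)=\frac{z}{\sigma^2}(\ell(x+z;a)-\ell(x;a))$ with $z\sim N(0,\sigma^2I)$ and $a$ uniform on $\{a_1,\dots,a_n\}$ independent. Then: (1) for any $x\in K$, $\mathbb{E}[g(x)\mid x]=\nabla\tilde f(x)$, and for any $u\in\mathbb{R}^d$ with $\|u\|_2\le\frac{\sigma}{2B}$, $\mathbb{E}[e^{\langle u,g(x)\rangle^2}\mid x]\le e^{\|u\|_2^2(2B/\sigma)^2}$; (2) $\tilde f$ is $(2B/\sigma^2)$-smooth.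
   Context: $K\subset\mathbb{R}^d$ is the (compact) parameter space. A function $h$ is $\lambda$-smooth if $|h(y)-h(x)-\langle y-x,\nabla h(x)\rangle|\le\frac\lambda2\|y-x\|_2^2$ for all $x,y$. *)

theory Defs
  imports "HOL-Probability.Probability"
begin

definition gauss :: "real \<Rightarrow> 'a::euclidean_space measure" where
  "gauss \<sigma> = density lborel
     (\<lambda>z. ennreal ((2 * pi * \<sigma>\<^sup>2) powr (- real DIM('a) / 2) * exp (- (norm z)\<^sup>2 / (2 * \<sigma>\<^sup>2))))"

definition lsmooth :: "real \<Rightarrow> ('a::euclidean_space \<Rightarrow> real) \<Rightarrow> bool" where
  "lsmooth L h \<longleftrightarrow> (\<exists>G. (\<forall>x. (h has_derivative (\<lambda>v. v \<bullet> G x)) (at x)) \<and>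
      (\<forall>x y. \<bar>h y - h x - (y - x) \<bullet> G x\<bar> \<le> L / 2 * (norm (y - x))\<^sup>2))"

end

theory Submission
  imports Defs
begin

definition gd :: "real \<Rightarrow> 'a::euclidean_space \<Rightarrow> real" where
  "gd \<sigma> z = (2 * pi * \<sigma>\<^sup>2) powr (- real DIM('a) / 2) * exp (- (norm z)\<^sup>2 / (2 * \<sigma>\<^sup>2))"

lemma sets_gauss[simp, measurable_cong]: "sets (gauss \<sigma>) = sets borel"
  by (simp add: gauss_def)

lemma space_gauss[simp]: "space (gauss \<sigma>) = UNIV"
  by (simp add: gauss_def)

lemma gauss_gd: "gauss \<sigma> = density lborel (\<lambda>z. ennreal (gd \<sigma> z))"
  unfolding gauss_def gd_def ..

lemma pw_aux: "0 < (c::real) \<Longrightarrow> (c powr a) ^ n = c powr (a * real n)"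
  by (metis powr_gt_zero powr_powr powr_realpow)

lemma gd_prod:
  assumes "\<sigma> > 0"
  shows "gd \<sigma> (z::'a::euclidean_space) = (\<Prod>b\<in>Basis. normal_density 0 \<sigma> (z \<bullet> b))"
proof -
  have n2: "(norm z)\<^sup>2 = (\<Sum>b\<in>Basis. (z \<bullet> b)\<^sup>2)"
  proof -
    have "z \<bullet> z = (\<Sum>b\<in>Basis. (z \<bullet> b) * (z \<bullet> b))" by (rule euclidean_inner)
    then show ?thesis using power2_norm_eq_inner[of z] by (simp add: power2_eq_square)
  qed
  have "(\<Prod>b\<in>Basis. normal_density 0 \<sigma> (z \<bullet> b)) =
     (\<Prod>b\<in>(Basis::'a set). 1 / sqrt (2 * pi * \<sigma>\<^sup>2)) * (\<Prod>b\<in>Basis. exp (- (z \<bullet> b)\<^sup>2 / (2 * \<sigma>\<^sup>2)))"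
    by (simp only: normal_density_def diff_zero prod.distrib)
  also have "(\<Prod>b\<in>Basis. exp (- (z \<bullet> b)\<^sup>2 / (2 * \<sigma>\<^sup>2))) = exp (- (norm z)\<^sup>2 / (2 * \<sigma>\<^sup>2))"
    by (simp add: exp_sum[symmetric] n2 sum_divide_distrib sum_negf)
  also have "(\<Prod>b\<in>(Basis::'a set). 1 / sqrt (2 * pi * \<sigma>\<^sup>2)) = (2 * pi * \<sigma>\<^sup>2) powr (- real DIM('a) / 2)"
  proof -
    have p: "2 * pi * \<sigma>\<^sup>2 > 0" using assms by simp
    have "(\<Prod>b\<in>(Basis::'a set). 1 / sqrt (2 * pi * \<sigma>\<^sup>2)) = ((2 * pi * \<sigma>\<^sup>2) powr (-1/2)) ^ DIM('a)"
      using p by (simp add: powr_minus_divide powr_half_sqrt)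
    also have "\<dots> = (2 * pi * \<sigma>\<^sup>2) powr (- real DIM('a) / 2)"
      using p by (simp only: pw_aux) simp
    finally show ?thesis .
  qed
  finally show ?thesis by (simp add: gd_def)
qed

lemma gd_pos: "\<sigma> > 0 \<Longrightarrow> gd \<sigma> z > 0" by (simp add: gd_def)

lemma gd_meas[measurable]: "gd \<sigma> \<in> borel_measurable borel"
  unfolding gd_def by measurable

lemma nn_gd_prod:
  assumes "\<sigma> > 0" and [measurable]: "\<And>b. b \<in> Basis \<Longrightarrow> g b \<in> borel_measurable borel"
  and nn: "\<And>b x. b \<in> Basis \<Longrightarrow> 0 \<le> g b x"
  shows "(\<integral>\<^sup>+z. ennreal (\<Prod>b\<in>Basis. g b (z \<bullet> b)) \<partial>gauss \<sigma>) =
     (\<Prod>b\<in>(Basis::'a::euclidean_space set). \<integral>\<^sup>+t. ennreal (g b t * normal_density 0 \<sigma> t) \<partial>lborel)"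
proof -
  have "(\<integral>\<^sup>+z. ennreal (\<Prod>b\<in>Basis. g b (z \<bullet> b)) \<partial>gauss \<sigma>) =
     (\<integral>\<^sup>+z. ennreal (gd \<sigma> z) * ennreal (\<Prod>b\<in>Basis. g b (z \<bullet> b)) \<partial>lborel)"
    unfolding gauss_gd by (subst nn_integral_density) auto
  also have "\<dots> = (\<integral>\<^sup>+z. (\<Prod>b\<in>(Basis::'a set). ennreal (g b (z \<bullet> b) * normal_density 0 \<sigma> (z \<bullet> b))) \<partial>lborel)"
    using assms nn by (simp add: gd_prod ennreal_mult'[symmetric] prod.distrib prod_ennreal prod_nonneg mult.commute)
  also have "\<dots> = (\<Prod>b\<in>(Basis::'a set). \<integral>\<^sup>+t. ennreal (g b t * normal_density 0 \<sigma> t) \<partial>lborel)"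
    by (rule nn_integral_lborel_prod) auto
  finally show ?thesis .
qed

lemma nd_int1: "\<sigma> > 0 \<Longrightarrow> (\<integral>\<^sup>+t. ennreal (normal_density \<mu> \<sigma> t) \<partial>lborel) = 1"
  by (subst nn_integral_eq_integral) auto

lemma prob_gauss: assumes s: "\<sigma> > 0" shows "prob_space (gauss \<sigma>)"
proof (rule prob_spaceI)
  have "(\<integral>\<^sup>+z. ennreal (\<Prod>b\<in>Basis. (\<lambda>_. 1::real) (z \<bullet> b)) \<partial>gauss \<sigma>) = 1"
    by (subst nn_gd_prod[OF s]) (auto simp: nd_int1[OF s])
  then show "emeasure (gauss \<sigma>) (space (gauss \<sigma>)) = (1::ennreal)"
    by simp
qed


definition eh :: "real \<Rightarrow> 'a::euclidean_space \<Rightarrow> 'a \<Rightarrow> real" where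
  "eh \<sigma> h z = exp (h \<bullet> z / \<sigma>\<^sup>2 - (norm h)\<^sup>2 / (2 * \<sigma>\<^sup>2))"

lemma eh_meas[measurable]: "eh \<sigma> h \<in> borel_measurable borel"
  unfolding eh_def by measurable

lemma eh_pos: "eh \<sigma> h z > 0" by (simp add: eh_def)

lemma eh_nonneg[simp]: "eh \<sigma> h z \<ge> 0" by (simp add: eh_def)

lemma gd_shift:
  assumes "\<sigma> > 0"
  shows "gd \<sigma> (w - h) = gd \<sigma> w * eh \<sigma> h w"
proof -
  have n: "(norm (w - h))\<^sup>2 = (norm w)\<^sup>2 - 2 * (h \<bullet> w) + (norm h)\<^sup>2"
    by (simp add: power2_norm_eq_inner inner_diff_left inner_diff_right inner_commute)
  have "- (norm (w - h))\<^sup>2 / (2 * \<sigma>\<^sup>2) = - (norm w)\<^sup>2 / (2 * \<sigma>\<^sup>2) + (h \<bullet> w / \<sigma>\<^sup>2 - (norm h)\<^sup>2 / (2 * \<sigma>\<^sup>2))"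
    using assms unfolding n by (simp add: field_simps)
  then show ?thesis unfolding gd_def eh_def by (simp only: exp_add mult.assoc)
qed

lemma gd_uminus: "gd \<sigma> (- z) = gd \<sigma> z" by (simp add: gd_def)

lemma lborel_distr_uminus_eucl: "distr lborel borel uminus = (lborel :: 'a::euclidean_space measure)"
  by (subst lborel_affine[of "-1" 0]) (auto simp: density_1 one_ennreal_def[symmetric])

lemma nn_shift:
  assumes s: "\<sigma> > 0" and [measurable]: "F \<in> borel_measurable borel"
  shows "(\<integral>\<^sup>+z. F (h + z) \<partial>gauss \<sigma>) = (\<integral>\<^sup>+w. F w * ennreal (eh \<sigma> h w) \<partial>gauss \<sigma>)"
proof -
  have "(\<integral>\<^sup>+z. F (h + z) \<partial>gauss \<sigma>) = (\<integral>\<^sup>+z. ennreal (gd \<sigma> z) * F (h + z) \<partial>lborel)"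
    unfolding gauss_gd by (subst nn_integral_density) auto
  also have "\<dots> = (\<integral>\<^sup>+z. (\<lambda>w. ennreal (gd \<sigma> (w - h)) * F w) (h + z) \<partial>lborel)"
    by simp
  also have "\<dots> = (\<integral>\<^sup>+w. ennreal (gd \<sigma> (w - h)) * F w \<partial>distr lborel borel ((+) h))"
    by (subst nn_integral_distr) auto
  also have "\<dots> = (\<integral>\<^sup>+w. ennreal (gd \<sigma> w) * (F w * ennreal (eh \<sigma> h w)) \<partial>lborel)"
    unfolding lborel_distr_plus using s
    by (intro nn_integral_cong) (simp add: gd_shift ennreal_mult' gd_pos[THEN less_imp_le] mult_ac)
  also have "\<dots> = (\<integral>\<^sup>+w. F w * ennreal (eh \<sigma> h w) \<partial>gauss \<sigma>)"
    unfolding gauss_gd by (subst nn_integral_density) auto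
  finally show ?thesis .
qed

lemma int_shift:
  fixes F :: "'a::euclidean_space \<Rightarrow> real"
  assumes s: "\<sigma> > 0" and [measurable]: "F \<in> borel_measurable borel"
  shows "(\<integral>z. F (h + z) \<partial>gauss \<sigma>) = (\<integral>w. F w * eh \<sigma> h w \<partial>gauss \<sigma>)"
proof -
  have "(\<integral>z. F (h + z) \<partial>gauss \<sigma>) = (\<integral>z. gd \<sigma> z * F (h + z) \<partial>lborel)"
    unfolding gauss_gd using s by (subst integral_density) (auto simp: gd_pos less_imp_le)
  also have "\<dots> = (\<integral>z. (\<lambda>w. gd \<sigma> (w - h) * F w) (h + z) \<partial>lborel)"
    by simp
  also have "\<dots> = (\<integral>w. gd \<sigma> (w - h) * F w \<partial>distr lborel borel ((+) h))"
    by (subst integral_distr) auto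
  also have "\<dots> = (\<integral>w. gd \<sigma> w * (F w * eh \<sigma> h w) \<partial>lborel)"
    unfolding lborel_distr_plus using s
    by (intro Bochner_Integration.integral_cong) (simp_all add: gd_shift mult_ac)
  also have "\<dots> = (\<integral>w. F w * eh \<sigma> h w \<partial>gauss \<sigma>)"
    unfolding gauss_gd using s by (subst integral_density) (auto simp: gd_pos less_imp_le)
  finally show ?thesis .
qed

lemma int_uminus:
  fixes F :: "'a::euclidean_space \<Rightarrow> real"
  assumes s: "\<sigma> > 0" and [measurable]: "F \<in> borel_measurable borel"
  shows "(\<integral>z. F (- z) \<partial>gauss \<sigma>) = (\<integral>z. F z \<partial>gauss \<sigma>)"
proof -
  have "(\<integral>z. F (- z) \<partial>gauss \<sigma>) = (\<integral>z. gd \<sigma> z * F (- z) \<partial>lborel)"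
    unfolding gauss_gd using s by (subst integral_density) (auto simp: gd_pos less_imp_le)
  also have "\<dots> = (\<integral>z. (\<lambda>w. gd \<sigma> w * F w) (- z) \<partial>lborel)"
    by (simp add: gd_uminus)
  also have "\<dots> = (\<integral>w. gd \<sigma> w * F w \<partial>distr lborel borel uminus)"
    by (subst integral_distr) auto
  also have "\<dots> = (\<integral>z. F z \<partial>gauss \<sigma>)"
    unfolding lborel_distr_uminus_eucl gauss_gd using s by (subst integral_density) (auto simp: gd_pos less_imp_le)
  finally show ?thesis .
qed


lemma eh_nn: assumes s: "\<sigma> > 0" shows "(\<integral>\<^sup>+z. ennreal (eh \<sigma> h z) \<partial>gauss \<sigma>) = 1"
proof -
  have "(\<integral>\<^sup>+z. (\<lambda>_. 1::ennreal) (h + z) \<partial>gauss \<sigma>) = 1"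
    using prob_space.emeasure_space_1[OF prob_gauss[OF s]] by simp
  then show ?thesis using nn_shift[OF s, of "\<lambda>_. 1" h] by simp
qed

lemma eh_integrable: assumes s: "\<sigma> > 0" shows "integrable (gauss \<sigma>) (eh \<sigma> h)"
  using eh_nn[OF s, of h]
  by (intro integrableI_nonneg) auto

lemma eh_int: assumes s: "\<sigma> > 0" shows "(\<integral>z. eh \<sigma> h z \<partial>gauss \<sigma>) = 1"
  using eh_nn[OF s, of h]
  by (subst (asm) nn_integral_eq_integral) (auto simp: eh_integrable[OF s])

lemma exp_inner_eh: assumes s: "\<sigma> > 0"
  shows "exp (v \<bullet> z) = eh \<sigma> (\<sigma>\<^sup>2 *\<^sub>R v) z * exp (\<sigma>\<^sup>2 * (norm v)\<^sup>2 / 2)"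
proof -
  have "v \<bullet> z = (\<sigma>\<^sup>2 *\<^sub>R v) \<bullet> z / \<sigma>\<^sup>2 - (norm (\<sigma>\<^sup>2 *\<^sub>R v))\<^sup>2 / (2 * \<sigma>\<^sup>2) + \<sigma>\<^sup>2 * (norm v)\<^sup>2 / 2"
    using s by (simp add: power2_eq_square field_simps)
  then show ?thesis unfolding eh_def by (simp add: exp_add[symmetric])
qed

lemma exp_inner_nn: assumes s: "\<sigma> > 0"
  shows "(\<integral>\<^sup>+z. ennreal (exp (v \<bullet> z)) \<partial>gauss \<sigma>) = ennreal (exp (\<sigma>\<^sup>2 * (norm v)\<^sup>2 / 2))"
proof -
  have "(\<integral>\<^sup>+z. ennreal (exp (v \<bullet> z)) \<partial>gauss \<sigma>) =
      (\<integral>\<^sup>+z. ennreal (eh \<sigma> (\<sigma>\<^sup>2 *\<^sub>R v) z) * ennreal (exp (\<sigma>\<^sup>2 * (norm v)\<^sup>2 / 2)) \<partial>gauss \<sigma>)"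
    by (intro nn_integral_cong) (simp add: exp_inner_eh[OF s] ennreal_mult' eh_pos less_imp_le)
  also have "\<dots> = ennreal (exp (\<sigma>\<^sup>2 * (norm v)\<^sup>2 / 2))"
    by (subst nn_integral_multc) (auto simp: eh_nn[OF s])
  finally show ?thesis .
qed

lemma exp_inner_integrable: assumes s: "\<sigma> > 0"
  shows "integrable (gauss \<sigma>) (\<lambda>z. exp (v \<bullet> z))"
  using exp_inner_nn[OF s, of v]
  by (intro integrableI_nonneg) auto

lemma inner_integrable: assumes s: "\<sigma> > 0"
  shows "integrable (gauss \<sigma>) (\<lambda>z. h \<bullet> z)"
proof (rule Bochner_Integration.integrable_bound)
  show "integrable (gauss \<sigma>) (\<lambda>z. exp (h \<bullet> z) + exp ((- h) \<bullet> z))"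
    using exp_inner_integrable[OF s, of h] exp_inner_integrable[OF s, of "-h"]
    by (intro Bochner_Integration.integrable_add) auto
  show "AE z in gauss \<sigma>. norm (h \<bullet> z) \<le> norm (exp (h \<bullet> z) + exp ((- h) \<bullet> z))"
  proof (intro AE_I2)
    fix z
    have a: "h \<bullet> z \<le> exp (h \<bullet> z)" using exp_ge_add_one_self[of "h \<bullet> z"] by linarith
    have b: "- (h \<bullet> z) \<le> exp (- (h \<bullet> z))" using exp_ge_add_one_self[of "- (h \<bullet> z)"] by linarith
    show "norm (h \<bullet> z) \<le> norm (exp (h \<bullet> z) + exp ((- h) \<bullet> z))"
      using a b by (simp add: abs_le_iff add_pos_pos) (smt (verit) exp_gt_zero)
  qed
qed auto

lemma inner_mean0: assumes s: "\<sigma> > 0"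
  shows "(\<integral>z. h \<bullet> z \<partial>gauss \<sigma>) = 0"
proof -
  have "(\<integral>z. h \<bullet> (- z) \<partial>gauss \<sigma>) = (\<integral>z. h \<bullet> z \<partial>gauss \<sigma>)"
    using int_uminus[OF s, of "\<lambda>z. h \<bullet> z"] by simp
  then show ?thesis by simp
qed

lemma norm_integrable: assumes s: "\<sigma> > 0"
  shows "integrable (gauss \<sigma>) (\<lambda>z::'a::euclidean_space. norm z)"
proof (rule Bochner_Integration.integrable_bound)
  show "integrable (gauss \<sigma>) (\<lambda>z::'a. \<Sum>b\<in>Basis. \<bar>z \<bullet> b\<bar>)"
  proof -
    have "integrable (gauss \<sigma>) (\<lambda>z. z \<bullet> b)" for b :: 'a
      using inner_integrable[OF s, of b] by (simp add: inner_commute)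
    then show ?thesis by (intro Bochner_Integration.integrable_sum integrable_abs) auto
  qed
  show "AE z in gauss \<sigma>. norm (norm z) \<le> norm (\<Sum>b\<in>Basis. \<bar>z \<bullet> b\<bar>)"
    by (intro AE_I2) (simp add: norm_le_l1 sum_nonneg)
qed auto


lemma smooth_core:
  fixes F :: "'a::euclidean_space \<Rightarrow> real"
  assumes s: "\<sigma> > 0" and Fm[measurable]: "F \<in> borel_measurable borel"
    and bnd: "\<And>z. 0 \<le> F z \<and> F z \<le> B"
  shows "\<bar>(\<integral>z. F (h + z) \<partial>gauss \<sigma>) - (\<integral>z. F z \<partial>gauss \<sigma>) - (\<integral>z. F z * (h \<bullet> z) \<partial>gauss \<sigma>) / \<sigma>\<^sup>2\<bar>
         \<le> B * (norm h)\<^sup>2 / (2 * \<sigma>\<^sup>2)"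
proof -
  interpret G: prob_space "gauss \<sigma>" by (rule prob_gauss[OF s])
  define c where "c = (norm h)\<^sup>2 / (2 * \<sigma>\<^sup>2)"
  define \<rho> where "\<rho> z = eh \<sigma> h z - 1 - h \<bullet> z / \<sigma>\<^sup>2" for z
  have B0: "0 \<le> B" using bnd[of 0] by linarith
  have c0: "0 \<le> c" unfolding c_def using s by simp
  have iF: "integrable (gauss \<sigma>) F"
    by (rule G.integrable_const_bound[where B=B]) (use bnd in auto)
  have ie: "integrable (gauss \<sigma>) (eh \<sigma> h)" by (rule eh_integrable[OF s])
  have ih: "integrable (gauss \<sigma>) (\<lambda>z. h \<bullet> z)" by (rule inner_integrable[OF s])
  have iFe: "integrable (gauss \<sigma>) (\<lambda>z. F z * eh \<sigma> h z)"
  proof (rule Bochner_Integration.integrable_bound)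
    show "integrable (gauss \<sigma>) (\<lambda>z. B * eh \<sigma> h z)" using ie by auto
    show "AE z in gauss \<sigma>. norm (F z * eh \<sigma> h z) \<le> norm (B * eh \<sigma> h z)"
      using bnd B0 by (intro AE_I2) (simp add: abs_mult mult_right_mono)
  qed auto
  have iFh: "integrable (gauss \<sigma>) (\<lambda>z. F z * (h \<bullet> z))"
  proof (rule Bochner_Integration.integrable_bound)
    show "integrable (gauss \<sigma>) (\<lambda>z. B * \<bar>h \<bullet> z\<bar>)" using ih by auto
    show "AE z in gauss \<sigma>. norm (F z * (h \<bullet> z)) \<le> norm (B * \<bar>h \<bullet> z\<bar>)"
      using bnd B0 by (intro AE_I2) (simp add: abs_mult mult_right_mono)
  qed auto
  have irho: "integrable (gauss \<sigma>) \<rho>" unfolding \<rho>_def using ie ih by auto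
  have iFrho: "integrable (gauss \<sigma>) (\<lambda>z. F z * \<rho> z)"
    unfolding \<rho>_def using iFe iF iFh by (simp add: algebra_simps)
  have eq: "(\<integral>z. F (h + z) \<partial>gauss \<sigma>) - (\<integral>z. F z \<partial>gauss \<sigma>) - (\<integral>z. F z * (h \<bullet> z) \<partial>gauss \<sigma>) / \<sigma>\<^sup>2
      = (\<integral>z. F z * \<rho> z \<partial>gauss \<sigma>)"
  proof -
    have "(\<integral>z. F z * \<rho> z \<partial>gauss \<sigma>) = (\<integral>z. F z * eh \<sigma> h z - F z - F z * (h \<bullet> z) / \<sigma>\<^sup>2 \<partial>gauss \<sigma>)"
      unfolding \<rho>_def by (intro Bochner_Integration.integral_cong) (auto simp: algebra_simps)
    also have "\<dots> = (\<integral>z. F z * eh \<sigma> h z \<partial>gauss \<sigma>) - (\<integral>z. F z \<partial>gauss \<sigma>) - (\<integral>z. F z * (h \<bullet> z) \<partial>gauss \<sigma>) / \<sigma>\<^sup>2"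
      using iFe iF iFh by simp
    finally show ?thesis using int_shift[OF s Fm, of h] by simp
  qed
  have pU: "measure (gauss \<sigma> :: 'a measure) UNIV = 1" using G.prob_space by simp
  have rho0: "(\<integral>z. \<rho> z \<partial>gauss \<sigma>) = 0"
    unfolding \<rho>_def using ie ih eh_int[OF s, of h] inner_mean0[OF s, of h] pU by simp
  have rho_lb: "\<rho> z \<ge> - c" for z
  proof -
    have "eh \<sigma> h z \<ge> 1 + (h \<bullet> z / \<sigma>\<^sup>2 - c)"
      unfolding eh_def c_def by (rule exp_ge_add_one_self)
    then show ?thesis unfolding \<rho>_def by simp
  qed
  have lo: "F z * \<rho> z \<ge> - (B * c)" for z
  proof (cases "\<rho> z \<ge> 0")
    case True
    have "F z * \<rho> z \<ge> 0" using True bnd[of z] by simp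
    moreover have "B * c \<ge> 0" using B0 c0 by simp
    ultimately show ?thesis by linarith
  next
    case False
    then have "F z * \<rho> z \<ge> B * \<rho> z" using bnd[of z] by (intro mult_right_mono_neg) auto
    moreover have "B * \<rho> z \<ge> B * (- c)" using rho_lb[of z] B0 by (intro mult_left_mono) auto
    ultimately show ?thesis by simp
  qed
  have up: "(F z - B) * \<rho> z \<le> B * c" for z
  proof (cases "\<rho> z \<ge> 0")
    case True
    then have "(F z - B) * \<rho> z \<le> 0" using bnd[of z] by (intro mult_nonpos_nonneg) auto
    moreover have "B * c \<ge> 0" using B0 c0 by simp
    ultimately show ?thesis by linarith
  next
    case False
    then have "(F z - B) * \<rho> z \<le> (- B) * \<rho> z" using bnd[of z] by (intro mult_right_mono_neg) auto
    moreover have "B * (- \<rho> z) \<le> B * c" using rho_lb[of z] B0 by (intro mult_left_mono) auto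
    ultimately show ?thesis by simp
  qed
  have I1: "(\<integral>z. F z * \<rho> z \<partial>gauss \<sigma>) \<ge> - (B * c)"
  proof -
    have "(\<integral>z. - (B * c) \<partial>(gauss \<sigma> :: 'a measure)) \<le> (\<integral>z. F z * \<rho> z \<partial>gauss \<sigma>)"
      by (rule Bochner_Integration.integral_mono[OF _ iFrho]) (auto simp: lo)
    then show ?thesis using pU by simp
  qed
  have I2: "(\<integral>z. F z * \<rho> z \<partial>gauss \<sigma>) \<le> B * c"
  proof -
    have "(\<integral>z. (F z - B) * \<rho> z \<partial>gauss \<sigma>) \<le> (\<integral>z. B * c \<partial>(gauss \<sigma> :: 'a measure))"
      using iFrho irho up by (intro Bochner_Integration.integral_mono) (auto simp: left_diff_distrib)
    moreover have "(\<integral>z. (F z - B) * \<rho> z \<partial>gauss \<sigma>) = (\<integral>z. F z * \<rho> z \<partial>gauss \<sigma>) - B * (\<integral>z. \<rho> z \<partial>gauss \<sigma>)"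
      using iFrho irho by (simp add: left_diff_distrib)
    ultimately show ?thesis using rho0 pU by simp
  qed
  show ?thesis unfolding eq using I1 I2 by (simp add: c_def abs_le_iff)
qed


lemma hs1: "(\<integral>\<^sup>+y. ennreal (exp (a * y) * std_normal_density y) \<partial>lborel) = ennreal (exp (a\<^sup>2 / 2))"
proof -
  have "(\<integral>\<^sup>+y. ennreal (exp (a * y) * std_normal_density y) \<partial>lborel) =
        (\<integral>\<^sup>+y. ennreal (normal_density a 1 y) * ennreal (exp (a\<^sup>2 / 2)) \<partial>lborel)"
  proof (intro nn_integral_cong)
    fix y :: real
    have e: "- (y - a)\<^sup>2 / 2 + a\<^sup>2 / 2 = a * y + - y\<^sup>2 / 2"
      by (simp add: power2_eq_square field_simps)
    have "normal_density a 1 y * exp (a\<^sup>2 / 2) = 1 / sqrt (2 * pi) * exp (- (y - a)\<^sup>2 / 2 + a\<^sup>2 / 2)"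
      unfolding normal_density_def exp_add by simp
    also have "\<dots> = exp (a * y) * std_normal_density y"
      unfolding e std_normal_density_def exp_add by simp
    finally have "exp (a * y) * std_normal_density y = normal_density a 1 y * exp (a\<^sup>2 / 2)" by simp
    then show "ennreal (exp (a * y) * std_normal_density y) = ennreal (normal_density a 1 y) * ennreal (exp (a\<^sup>2 / 2))"
      by (simp add: ennreal_mult')
  qed
  also have "\<dots> = ennreal (exp (a\<^sup>2 / 2))"
    by (subst nn_integral_multc) (auto simp: nd_int1)
  finally show ?thesis .
qed

lemma chi1:
  assumes k: "0 \<le> k" "k < 1/2"
  shows "(\<integral>\<^sup>+y. ennreal (exp (k * y\<^sup>2) * std_normal_density y) \<partial>lborel) = ennreal (1 / sqrt (1 - 2 * k))"
proof -
  define s where "s = 1 / sqrt (1 - 2 * k)"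
  have q: "1 - 2 * k > 0" using k by simp
  have s0: "s > 0" unfolding s_def using q by simp
  have "(\<integral>\<^sup>+y. ennreal (exp (k * y\<^sup>2) * std_normal_density y) \<partial>lborel) =
        (\<integral>\<^sup>+y. ennreal (normal_density 0 s y) * ennreal (1 / sqrt (1 - 2 * k)) \<partial>lborel)"
  proof (intro nn_integral_cong)
    fix y :: real
    have ss: "s\<^sup>2 = 1 / (1 - 2 * k)" unfolding s_def using q by (simp add: power_divide)
    have "normal_density 0 s y = 1 / sqrt (2 * pi) * sqrt (1 - 2 * k) * exp (- (1 - 2 * k) * y\<^sup>2 / 2)"
      unfolding normal_density_def ss using q
      by (simp add: real_sqrt_divide real_sqrt_mult field_simps)
    then have "exp (k * y\<^sup>2) * std_normal_density y = normal_density 0 s y * (1 / sqrt (1 - 2 * k))"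
      unfolding std_normal_density_def using q
      by (simp add: mult_exp_exp field_simps)
    then show "ennreal (exp (k * y\<^sup>2) * std_normal_density y) = ennreal (normal_density 0 s y) * ennreal (1 / sqrt (1 - 2 * k))"
      using q by (subst ennreal_mult'[symmetric]) simp_all
  qed
  also have "\<dots> = ennreal (1 / sqrt (1 - 2 * k))"
    by (subst nn_integral_multc) (auto simp: nd_int1 s0)
  finally show ?thesis .
qed

lemma chi_bound:
  assumes k: "0 \<le> k" "k \<le> 1/4"
  shows "1 / sqrt (1 - 2 * k) \<le> exp (4 * k)"
proof -
  have q: "1 - 2 * k > 0" using k by simp
  have l: "- (2 * k) - 2 * (2 * k)\<^sup>2 \<le> ln (1 - 2 * k)"
    using k by (intro ln_one_minus_pos_lower_bound) auto
  have "sqrt (1 - 2 * k) = exp (ln (1 - 2 * k) / 2)"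
    using q by (simp add: powr_half_sqrt[symmetric] powr_def)
  also have "exp (ln (1 - 2 * k) / 2) \<ge> exp (- (4 * k))"
  proof -
    have "k * k \<le> k * (1/4)" using k by (intro mult_left_mono) auto
    then have "ln (1 - 2 * k) \<ge> - (8 * k)" using l k by (simp add: power2_eq_square)
    then show ?thesis by simp
  qed
  finally have "sqrt (1 - 2 * k) \<ge> exp (- (4 * k))" .
  then have "1 / sqrt (1 - 2 * k) \<le> 1 / exp (- (4 * k))"
    using q by (intro divide_left_mono) auto
  then show ?thesis by (simp add: exp_minus divide_inverse)
qed


lemma mgf_sq:
  fixes v :: "'a::euclidean_space"
  assumes s: "\<sigma> > 0" and c: "c \<ge> 0" and k: "2 * (c * \<sigma>\<^sup>2 * (norm v)\<^sup>2) < 1"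
  shows "(\<integral>\<^sup>+z. ennreal (exp (c * (v \<bullet> z)\<^sup>2)) \<partial>gauss \<sigma>) = ennreal (1 / sqrt (1 - 2 * (c * \<sigma>\<^sup>2 * (norm v)\<^sup>2)))"
proof -
  interpret G: prob_space "gauss \<sigma> :: 'a measure" by (rule prob_gauss[OF s])
  interpret P: pair_sigma_finite "gauss \<sigma> :: 'a measure" "lborel :: real measure"
    by (simp add: pair_sigma_finite_def G.sigma_finite_measure_axioms lborel.sigma_finite_measure_axioms)
  define r where "r = sqrt (2 * c)"
  have r2: "r\<^sup>2 = 2 * c" unfolding r_def using c by simp
  have hs: "ennreal (exp (c * t\<^sup>2)) = (\<integral>\<^sup>+y. ennreal (exp ((r * t) * y) * std_normal_density y) \<partial>lborel)" for t
  proof -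
    have "(r * t)\<^sup>2 / 2 = c * t\<^sup>2" by (simp add: power_mult_distrib r2)
    then show ?thesis using hs1[of "r * t"] by simp
  qed
  have "(\<integral>\<^sup>+z. ennreal (exp (c * (v \<bullet> z)\<^sup>2)) \<partial>gauss \<sigma>) =
      (\<integral>\<^sup>+z. (\<integral>\<^sup>+y. ennreal (exp ((r * (v \<bullet> z)) * y) * std_normal_density y) \<partial>lborel) \<partial>gauss \<sigma>)"
    by (simp add: hs)
  also have "\<dots> = (\<integral>\<^sup>+y. (\<integral>\<^sup>+z. ennreal (exp ((r * (v \<bullet> z)) * y) * std_normal_density y) \<partial>gauss \<sigma>) \<partial>lborel)"
    by (rule P.Fubini'[symmetric]) measurable
  also have "\<dots> = (\<integral>\<^sup>+y. (\<integral>\<^sup>+z. ennreal (exp (((r * y) *\<^sub>R v) \<bullet> z)) * ennreal (std_normal_density y) \<partial>gauss \<sigma>) \<partial>lborel)"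
    by (intro nn_integral_cong) (simp add: ennreal_mult' mult_ac)
  also have "\<dots> = (\<integral>\<^sup>+y. ennreal (exp ((c * \<sigma>\<^sup>2 * (norm v)\<^sup>2) * y\<^sup>2) * std_normal_density y) \<partial>lborel)"
  proof (intro nn_integral_cong)
    fix y :: real
    have e: "\<sigma>\<^sup>2 * (norm ((r * y) *\<^sub>R v))\<^sup>2 / 2 = (c * \<sigma>\<^sup>2 * (norm v)\<^sup>2) * y\<^sup>2"
      by (simp add: power_mult_distrib r2)
    show "(\<integral>\<^sup>+z. ennreal (exp (((r * y) *\<^sub>R v) \<bullet> z)) * ennreal (std_normal_density y) \<partial>gauss \<sigma>) =
        ennreal (exp ((c * \<sigma>\<^sup>2 * (norm v)\<^sup>2) * y\<^sup>2) * std_normal_density y)"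
    proof -
      have I: "(\<integral>\<^sup>+z. ennreal (exp (((r * y) *\<^sub>R v) \<bullet> z)) \<partial>gauss \<sigma>) = ennreal (exp ((c * \<sigma>\<^sup>2 * (norm v)\<^sup>2) * y\<^sup>2))"
        using exp_inner_nn[OF s, of "(r * y) *\<^sub>R v"] unfolding e .
      show ?thesis using I by (simp add: nn_integral_multc ennreal_mult')
    qed
  qed
  also have "\<dots> = ennreal (1 / sqrt (1 - 2 * (c * \<sigma>\<^sup>2 * (norm v)\<^sup>2)))"
    using k c by (intro chi1) auto
  finally show ?thesis .
qed


lemma int_bdd_inner:
  fixes \<phi> :: "'a::euclidean_space \<Rightarrow> real"
  assumes s: "\<sigma> > 0" and [measurable]: "\<phi> \<in> borel_measurable borel" and b: "\<And>z. \<bar>\<phi> z\<bar> \<le> M"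
  shows "integrable (gauss \<sigma>) (\<lambda>z. \<phi> z * (h \<bullet> z))"
proof (rule Bochner_Integration.integrable_bound)
  show "integrable (gauss \<sigma>) (\<lambda>z. M * \<bar>h \<bullet> z\<bar>)" using inner_integrable[OF s, of h] by auto
  show "AE z in gauss \<sigma>. norm (\<phi> z * (h \<bullet> z)) \<le> norm (M * \<bar>h \<bullet> z\<bar>)"
  proof (intro AE_I2)
    fix z
    have "\<bar>\<phi> z\<bar> * \<bar>h \<bullet> z\<bar> \<le> M * \<bar>h \<bullet> z\<bar>" using b[of z] by (intro mult_right_mono) auto
    moreover have "0 \<le> M" using b[of z] by linarith
    ultimately show "norm (\<phi> z * (h \<bullet> z)) \<le> norm (M * \<bar>h \<bullet> z\<bar>)" by (simp add: abs_mult)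
  qed
qed auto

lemma int_bdd_vec:
  fixes \<phi> :: "'a::euclidean_space \<Rightarrow> real"
  assumes s: "\<sigma> > 0" and [measurable]: "\<phi> \<in> borel_measurable borel" and b: "\<And>z. \<bar>\<phi> z\<bar> \<le> M"
  shows "integrable (gauss \<sigma>) (\<lambda>z. \<phi> z *\<^sub>R z)"
proof (rule Bochner_Integration.integrable_bound)
  show "integrable (gauss \<sigma>) (\<lambda>z::'a. M * norm z)" using norm_integrable[OF s] by auto
  show "AE z in gauss \<sigma>. norm (\<phi> z *\<^sub>R z) \<le> norm (M * norm z)"
  proof (intro AE_I2)
    fix z :: 'a
    have "\<bar>\<phi> z\<bar> * norm z \<le> M * norm z" using b[of z] by (intro mult_right_mono) auto
    moreover have "0 \<le> M" using b[of z] by linarith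
    ultimately show "norm (\<phi> z *\<^sub>R z) \<le> norm (M * norm z)" by simp
  qed
qed auto


theorem lemma7:
  fixes loss :: "'a::euclidean_space \<Rightarrow> 'b \<Rightarrow> real"
    and as :: "'b list" and B \<sigma> :: real and K :: "'a set"
    and f ftil :: "'a \<Rightarrow> real"
  assumes range: "\<And>x a. 0 \<le> loss x a \<and> loss x a \<le> B"
    and meas: "\<And>a. (\<lambda>x. loss x a) \<in> borel_measurable borel"
    and ne: "as \<noteq> []"
    and sig: "\<sigma> > 0"
    and K: "compact K"
    and f_def: "\<And>x. f x = (\<Sum>i<length as. loss x (as ! i)) / real (length as)"
    and ftil_def: "\<And>x. ftil x = (\<integral>z. f (x + z) \<partial>gauss \<sigma>)"
  shows "(\<forall>x\<in>K.
            (ftil has_derivative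
               (\<lambda>v. v \<bullet> ((\<Sum>i<length as.
                   \<integral>z. (1 / \<sigma>\<^sup>2 * (loss (x + z) (as ! i) - loss x (as ! i))) *\<^sub>R z \<partial>gauss \<sigma>)
                  /\<^sub>R real (length as)))) (at x)
          \<and> (\<forall>u. 2 * B * norm u \<le> \<sigma> \<longrightarrow>
               (\<Sum>i<length as.
                   \<integral>\<^sup>+z. ennreal (exp ((u \<bullet> ((1 / \<sigma>\<^sup>2 * (loss (x + z) (as ! i) - loss x (as ! i))) *\<^sub>R z))\<^sup>2))
                   \<partial>gauss \<sigma>) / ennreal (real (length as))
               \<le> ennreal (exp ((norm u)\<^sup>2 * (2 * B / \<sigma>)\<^sup>2))))
         \<and> lsmooth (2 * B / \<sigma>\<^sup>2) ftil"
proof -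
  interpret G: prob_space "gauss \<sigma> :: 'a measure" by (rule prob_gauss[OF sig])
  define n where "n = length as"
  note meas[measurable]
  have n0: "n > 0" using ne unfolding n_def by simp
  have B0: "0 \<le> B" using range[of 0 "as ! 0"] by linarith
  have meas2[measurable]: "(\<lambda>z. loss (x + z) a) \<in> borel_measurable borel" for x a
    using measurable_compose[OF _ meas[of a], of "\<lambda>z. x + z" borel] by simp
  have fdef': "f = (\<lambda>x. (\<Sum>i<n. loss x (as ! i)) / real n)" using f_def unfolding n_def by auto
  have fm[measurable]: "f \<in> borel_measurable borel" unfolding fdef' by measurable
  have fm2[measurable]: "(\<lambda>z. f (x + z)) \<in> borel_measurable borel" for x
    using measurable_compose[OF _ fm, of "\<lambda>z. x + z" borel] by simp
  have fb: "0 \<le> f x \<and> f x \<le> B" for x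
  proof
    show "0 \<le> f x" unfolding fdef' using range by (auto intro!: sum_nonneg divide_nonneg_nonneg)
    have "(\<Sum>i<n. loss x (as ! i)) \<le> (\<Sum>i<n. B)" using range by (intro sum_mono) auto
    then have "(\<Sum>i<n. loss x (as ! i)) \<le> real n * B" by simp
    then show "f x \<le> B" unfolding fdef' using n0 by (simp add: divide_le_eq mult.commute)
  qed
  define Gx where "Gx x = (\<Sum>i<length as.
                   \<integral>z. (1 / \<sigma>\<^sup>2 * (loss (x + z) (as ! i) - loss x (as ! i))) *\<^sub>R z \<partial>gauss \<sigma>)
                  /\<^sub>R real (length as)" for x
  have dlb: "\<bar>1 / \<sigma>\<^sup>2 * (loss (x + z) a - loss x a)\<bar> \<le> B / \<sigma>\<^sup>2" for x z a
  proof -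
    have "\<bar>loss (x + z) a - loss x a\<bar> \<le> B" using range[of "x + z" a] range[of x a] by linarith
    then show ?thesis using sig by (simp add: abs_mult divide_right_mono)
  qed
  have Gin: "h \<bullet> Gx x = (\<integral>z. f (x + z) * (h \<bullet> z) \<partial>gauss \<sigma>) / \<sigma>\<^sup>2" for x h
  proof -
    have i1: "integrable (gauss \<sigma>) (\<lambda>z. (1 / \<sigma>\<^sup>2 * (loss (x + z) a - loss x a)) *\<^sub>R z)" for a
      by (rule int_bdd_vec[OF sig _ dlb]) measurable
    have i2: "integrable (gauss \<sigma>) (\<lambda>z. loss (x + z) a * (h \<bullet> z))" for a
      by (rule int_bdd_inner[OF sig, where M=B]) (use range in \<open>auto simp: abs_le_iff\<close>)
    have ih: "integrable (gauss \<sigma>) (\<lambda>z. h \<bullet> z)" by (rule inner_integrable[OF sig])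
    have each: "h \<bullet> (\<integral>z. (1 / \<sigma>\<^sup>2 * (loss (x + z) a - loss x a)) *\<^sub>R z \<partial>gauss \<sigma>)
        = (\<integral>z. loss (x + z) a * (h \<bullet> z) \<partial>gauss \<sigma>) / \<sigma>\<^sup>2" for a
    proof -
      have "h \<bullet> (\<integral>z. (1 / \<sigma>\<^sup>2 * (loss (x + z) a - loss x a)) *\<^sub>R z \<partial>gauss \<sigma>)
          = (\<integral>z. h \<bullet> ((1 / \<sigma>\<^sup>2 * (loss (x + z) a - loss x a)) *\<^sub>R z) \<partial>gauss \<sigma>)"
        by (rule integral_inner_right[symmetric]) (rule i1)
      also have "\<dots> = (\<integral>z. (loss (x + z) a * (h \<bullet> z) - loss x a * (h \<bullet> z)) / \<sigma>\<^sup>2 \<partial>gauss \<sigma>)"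
        by (intro Bochner_Integration.integral_cong) (auto simp: field_simps)
      also have "\<dots> = ((\<integral>z. loss (x + z) a * (h \<bullet> z) \<partial>gauss \<sigma>) - loss x a * (\<integral>z. h \<bullet> z \<partial>gauss \<sigma>)) / \<sigma>\<^sup>2"
        using i2[of a] ih by simp
      also have "\<dots> = (\<integral>z. loss (x + z) a * (h \<bullet> z) \<partial>gauss \<sigma>) / \<sigma>\<^sup>2"
        using inner_mean0[OF sig, of h] by simp
      finally show ?thesis .
    qed
    have "h \<bullet> Gx x = (\<Sum>i<n. h \<bullet> (\<integral>z. (1 / \<sigma>\<^sup>2 * (loss (x + z) (as ! i) - loss x (as ! i))) *\<^sub>R z \<partial>gauss \<sigma>)) / real n"
      unfolding Gx_def n_def by (simp add: inner_sum_right divide_inverse mult.commute)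
    also have "\<dots> = (\<Sum>i<n. (\<integral>z. loss (x + z) (as ! i) * (h \<bullet> z) \<partial>gauss \<sigma>)) / \<sigma>\<^sup>2 / real n"
      unfolding each by (simp add: sum_divide_distrib)
    also have "(\<Sum>i<n. (\<integral>z. loss (x + z) (as ! i) * (h \<bullet> z) \<partial>gauss \<sigma>)) = (\<integral>z. (\<Sum>i<n. loss (x + z) (as ! i)) * (h \<bullet> z) \<partial>gauss \<sigma>)"
      using i2 by (simp add: sum_distrib_right)
    also have "\<dots> / \<sigma>\<^sup>2 / real n = (\<integral>z. f (x + z) * (h \<bullet> z) \<partial>gauss \<sigma>) / \<sigma>\<^sup>2"
      unfolding fdef' by (simp add: field_simps)
    finally show ?thesis .
  qed
  have Q: "\<bar>ftil y - ftil x - (y - x) \<bullet> Gx x\<bar> \<le> B / (2 * \<sigma>\<^sup>2) * (norm (y - x))\<^sup>2" for x y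
  proof -
    have c: "\<bar>(\<integral>z. f (x + ((y - x) + z)) \<partial>gauss \<sigma>) - (\<integral>z. f (x + z) \<partial>gauss \<sigma>) - (\<integral>z. f (x + z) * ((y - x) \<bullet> z) \<partial>gauss \<sigma>) / \<sigma>\<^sup>2\<bar>
         \<le> B * (norm (y - x))\<^sup>2 / (2 * \<sigma>\<^sup>2)"
      by (rule smooth_core[OF sig fm2 fb])
    have "x + ((y - x) + z) = y + z" for z by (simp add: algebra_simps)
    then show ?thesis using c by (simp add: ftil_def Gin)
  qed
  have C0: "0 \<le> B / (2 * \<sigma>\<^sup>2)" using B0 sig by simp
  have deriv: "(ftil has_derivative (\<lambda>v. v \<bullet> Gx x)) (at x)" for x
    unfolding has_derivative_at_alt
  proof (intro conjI allI impI)
    show "bounded_linear (\<lambda>v. v \<bullet> Gx x)" by (rule bounded_linear_inner_left)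
    fix e :: real assume e: "e > 0"
    define C where "C = B / (2 * \<sigma>\<^sup>2)"
    have C0': "0 \<le> C" using C0 unfolding C_def .
    show "\<exists>d>0. \<forall>y. norm (y - x) < d \<longrightarrow> norm (ftil y - ftil x - (y - x) \<bullet> Gx x) \<le> e * norm (y - x)"
    proof (intro exI[of _ "e / (C + 1)"] conjI allI impI)
      show "e / (C + 1) > 0" using e C0' by simp
      fix y assume y: "norm (y - x) < e / (C + 1)"
      have "norm (ftil y - ftil x - (y - x) \<bullet> Gx x) \<le> C * (norm (y - x))\<^sup>2"
        using Q[of y x] unfolding C_def by simp
      also have "\<dots> = (C * norm (y - x)) * norm (y - x)" by (simp add: power2_eq_square)
      also have "\<dots> \<le> e * norm (y - x)"
      proof (intro mult_right_mono)
        have "C * norm (y - x) \<le> C * (e / (C + 1))" using y C0' by (intro mult_left_mono) auto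
        also have "\<dots> \<le> e" using e C0' by (simp add: field_simps)
        finally show "C * norm (y - x) \<le> e" .
      qed simp
      finally show "norm (ftil y - ftil x - (y - x) \<bullet> Gx x) \<le> e * norm (y - x)" .
    qed
  qed
  have mgf: "(\<Sum>i<length as.
                   \<integral>\<^sup>+z. ennreal (exp ((u \<bullet> ((1 / \<sigma>\<^sup>2 * (loss (x + z) (as ! i) - loss x (as ! i))) *\<^sub>R z))\<^sup>2))
                   \<partial>gauss \<sigma>) / ennreal (real (length as))
               \<le> ennreal (exp ((norm u)\<^sup>2 * (2 * B / \<sigma>)\<^sup>2))" if u: "2 * B * norm u \<le> \<sigma>" for x u
  proof -
    define c where "c = (B / \<sigma>\<^sup>2)\<^sup>2"
    define k where "k = c * \<sigma>\<^sup>2 * (norm u)\<^sup>2"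
    have c0: "0 \<le> c" unfolding c_def by simp
    have k0: "0 \<le> k" unfolding k_def using c0 by simp
    have keq: "k = (2 * B * norm u)\<^sup>2 / (4 * \<sigma>\<^sup>2)"
      unfolding k_def c_def using sig by (simp add: power_divide power_mult_distrib field_simps)
    have "(2 * B * norm u)\<^sup>2 \<le> \<sigma>\<^sup>2" using u B0 by (intro power_mono) auto
    then have k4: "k \<le> 1/4" unfolding keq using sig by (simp add: divide_le_eq)
    have E: "exp (4 * k) = exp ((norm u)\<^sup>2 * (2 * B / \<sigma>)\<^sup>2)"
      unfolding k_def c_def using sig by (simp add: power_divide power_mult_distrib field_simps)
    define E0 where "E0 = ennreal (exp ((norm u)\<^sup>2 * (2 * B / \<sigma>)\<^sup>2))"
    have each: "(\<integral>\<^sup>+z. ennreal (exp ((u \<bullet> ((1 / \<sigma>\<^sup>2 * (loss (x + z) a - loss x a)) *\<^sub>R z))\<^sup>2)) \<partial>gauss \<sigma>) \<le> E0" for a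
    proof -
      have "(\<integral>\<^sup>+z. ennreal (exp ((u \<bullet> ((1 / \<sigma>\<^sup>2 * (loss (x + z) a - loss x a)) *\<^sub>R z))\<^sup>2)) \<partial>gauss \<sigma>)
          \<le> (\<integral>\<^sup>+z. ennreal (exp (c * (u \<bullet> z)\<^sup>2)) \<partial>gauss \<sigma>)"
      proof (intro nn_integral_mono ennreal_leI)
        fix z
        define r where "r = 1 / \<sigma>\<^sup>2 * (loss (x + z) a - loss x a)"
        have "r\<^sup>2 \<le> c" unfolding c_def r_def
          using dlb[of x z a] by (metis abs_le_square_iff abs_of_nonneg B0 sig divide_nonneg_pos zero_less_power)
        then have "r\<^sup>2 * (u \<bullet> z)\<^sup>2 \<le> c * (u \<bullet> z)\<^sup>2" by (intro mult_right_mono) auto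
        then show "exp ((u \<bullet> ((1 / \<sigma>\<^sup>2 * (loss (x + z) a - loss x a)) *\<^sub>R z))\<^sup>2) \<le> exp (c * (u \<bullet> z)\<^sup>2)"
          unfolding r_def[symmetric] by (simp add: power_mult_distrib)
      qed
      also have "\<dots> = ennreal (1 / sqrt (1 - 2 * k))"
        unfolding k_def using k4 by (intro mgf_sq[OF sig c0]) (simp add: k_def[symmetric])
      also have "\<dots> \<le> E0" unfolding E0_def E[symmetric] using k0 k4 by (intro ennreal_leI chi_bound) auto
      finally show ?thesis .
    qed
    have "(\<Sum>i<length as. \<integral>\<^sup>+z. ennreal (exp ((u \<bullet> ((1 / \<sigma>\<^sup>2 * (loss (x + z) (as ! i) - loss x (as ! i))) *\<^sub>R z))\<^sup>2)) \<partial>gauss \<sigma>)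
        \<le> (\<Sum>i<length as. E0)" by (intro sum_mono each)
    also have "\<dots> = E0 * ennreal (real (length as))" by (simp add: ennreal_of_nat_eq_real_of_nat mult.commute)
    finally have S: "(\<Sum>i<length as. \<integral>\<^sup>+z. ennreal (exp ((u \<bullet> ((1 / \<sigma>\<^sup>2 * (loss (x + z) (as ! i) - loss x (as ! i))) *\<^sub>R z))\<^sup>2)) \<partial>gauss \<sigma>)
        \<le> E0 * ennreal (real (length as))" .
    have "(\<Sum>i<length as. \<integral>\<^sup>+z. ennreal (exp ((u \<bullet> ((1 / \<sigma>\<^sup>2 * (loss (x + z) (as ! i) - loss x (as ! i))) *\<^sub>R z))\<^sup>2)) \<partial>gauss \<sigma>) / ennreal (real (length as))
        \<le> E0 * ennreal (real (length as)) / ennreal (real (length as))"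
      by (rule divide_right_mono_ennreal[OF S])
    also have "\<dots> = E0" using ne by (intro ennreal_mult_divide_eq) auto
    finally show ?thesis unfolding E0_def .
  qed
  have part1: "\<forall>x\<in>K. (ftil has_derivative (\<lambda>v. v \<bullet> Gx x)) (at x) \<and> (\<forall>u. 2 * B * norm u \<le> \<sigma> \<longrightarrow>
               (\<Sum>i<length as.
                   \<integral>\<^sup>+z. ennreal (exp ((u \<bullet> ((1 / \<sigma>\<^sup>2 * (loss (x + z) (as ! i) - loss x (as ! i))) *\<^sub>R z))\<^sup>2))
                   \<partial>gauss \<sigma>) / ennreal (real (length as))
               \<le> ennreal (exp ((norm u)\<^sup>2 * (2 * B / \<sigma>)\<^sup>2)))"
    using deriv mgf by blast
  have part2: "lsmooth (2 * B / \<sigma>\<^sup>2) ftil"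
    unfolding lsmooth_def
  proof (intro exI[of _ Gx] conjI allI)
    show "(ftil has_derivative (\<lambda>v. v \<bullet> Gx x)) (at x)" for x by (rule deriv)
    fix x y :: 'a
    have "B / (2 * \<sigma>\<^sup>2) * (norm (y - x))\<^sup>2 \<le> 2 * B / \<sigma>\<^sup>2 / 2 * (norm (y - x))\<^sup>2"
      using B0 sig by (intro mult_right_mono) (auto simp: field_simps)
    then show "\<bar>ftil y - ftil x - (y - x) \<bullet> Gx x\<bar> \<le> 2 * B / \<sigma>\<^sup>2 / 2 * (norm (y - x))\<^sup>2"
      using Q[of y x] by (meson order_trans)
  qed
  show ?thesis using part1 part2 unfolding Gx_def by blast
qed

end
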